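(* Let $U\subset\mathbb{R}^2$ be open and let $x:U\to\mathbb{R}^3$ and $\xi:U\to S^2$ be proper frontals with the same singular sets, $\Sigma(x)=\Sigma(\xi)$, such that $\xi$ is the unit normal vector field of $x$. Then a curve on $x$ is a Kummer principal line of the congruence $\{x,\xi\}$ if and only if it is a line of curvature of $x$.
   Context: A frontal is a smooth map $f:U\to\mathbb{R}^3$ admitting locally a smooth unit vector field orthogonal to $f_{u_1},f_{u_2}$; proper means its singular set $\Sigma(f)=\{u:f\text{ not immersive at }u\}$ has empty interior. A tangent moving basis $\Omega=(w_1\ w_2)$ of $x$ is a smooth $3\times2$ matrix valued map with linearly independent columns whose span contains $x_{u_1},x_{u_2}$; choose it with $\xi=w_1\times w_2/\|w_1\times w_2\|$, so $\Omega$ is also a tangent moving basis of $\xi$. Write $Dx=\Omega\Lambda_\Omega^T$, $D\xi=\Omega\Delta_\Omega^T$, $\lambda_\Omega=\det\Lambda_\Omega$, $\mathbf{I}_\Omega=\Omega^T\Omega$, $\mathbf{II}_\Omega=-\Omega^TD\xi$, $\mu_\Omega=-\mathbf{II}_\Omega^T\mathbf{I}_\Omega^{-1}$, $\alpha_\Omega=\mu_\Omega\mathrm{adj}(\Lambda_\Omega)$, $\mathbf{P}=\begin{pmatrix}0&1\\-1&0\end{pmatrix}$. A curve $\gamma$ in $U$ is a line of curvature of the frontal $x$ when $\lambda_\Omega\,\gamma'^T\mathbf{P}\alpha_\Omega^T(\gamma)\gamma'=0$. Kummer principal line: with $\boldsymbol{\mathcal{I}}_\Omega=\Omega^T\Omega$,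 $\boldsymbol{\mathcal{II}}_\Omega=-\Omega^TDx$, and $\mathscr{K}_q^\Omega(b)=\frac{b^T\boldsymbol{\mathcal{II}}_\Omega(q)\mathrm{adj}(\Delta_\Omega(q)^T)b}{b^T\boldsymbol{\mathcal{I}}_\Omega(q)b}$ ($b\ne0$), a curve $\gamma$ is a Kummer principal line if for every $t$ with $b=\Delta_\Omega^T(\gamma(t))\gamma'(t)\neq0$, $\mathscr{K}_{\gamma(t)}^\Omega(b)$ is an extreme (maximum or minimum) value of $\mathscr{K}_{\gamma(t)}^\Omega$. *)

theory Defs
  imports "HOL-Analysis.Analysis"
begin

text \<open>C^k and C^infinity maps on an (open) set, via iterated partial (directional)
  derivatives along the standard basis.\<close>
fun Ck_on :: "nat \<Rightarrow> 'a::euclidean_space set \<Rightarrow> ('a \<Rightarrow> 'b::real_normed_vector) \<Rightarrow> bool" where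
  "Ck_on 0 U f = continuous_on U f"
| "Ck_on (Suc k) U f = ((\<forall>u\<in>U. f differentiable (at u)) \<and>
      (\<forall>i\<in>Basis. Ck_on k U (\<lambda>u. frechet_derivative f (at u) i)))"

definition smooth_on :: "'a::euclidean_space set \<Rightarrow> ('a \<Rightarrow> 'b::real_normed_vector) \<Rightarrow> bool" where
  "smooth_on U f \<longleftrightarrow> (\<forall>k. Ck_on k U f)"

text \<open>Frontals U \<subseteq> R^2 \<rightarrow> R^3.\<close>
definition frontal :: "(real^2) set \<Rightarrow> (real^2 \<Rightarrow> real^3) \<Rightarrow> bool" where
  "frontal U f \<longleftrightarrow> smooth_on U f \<and>
     (\<forall>u\<in>U. \<exists>V n. open V \<and> u \<in> V \<and> V \<subseteq> U \<and> smooth_on V n \<and>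
        (\<forall>v\<in>V. norm (n v) = 1 \<and> (\<forall>i\<in>Basis. n v \<bullet> frechet_derivative f (at v) i = 0)))"

definition singular_set :: "(real^2) set \<Rightarrow> (real^2 \<Rightarrow> real^3) \<Rightarrow> (real^2) set" where
  "singular_set U f = {u \<in> U. \<not> inj (frechet_derivative f (at u))}"

definition proper_frontal :: "(real^2) set \<Rightarrow> (real^2 \<Rightarrow> real^3) \<Rightarrow> bool" where
  "proper_frontal U f \<longleftrightarrow> frontal U f \<and> interior (singular_set U f) = {}"

text \<open>xi is the unit normal vector field of x.\<close>
definition unit_normal_of :: "(real^2) set \<Rightarrow> (real^2 \<Rightarrow> real^3) \<Rightarrow> (real^2 \<Rightarrow> real^3) \<Rightarrow> bool" where
  "unit_normal_of U x \<xi> \<longleftrightarrow> smooth_on U \<xi> \<and>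
     (\<forall>u\<in>U. norm (\<xi> u) = 1 \<and> (\<forall>i\<in>Basis. \<xi> u \<bullet> frechet_derivative x (at u) i = 0))"

text \<open>Jacobian matrix (3x2) of a map R^2 \<rightarrow> R^3.\<close>
definition jac :: "(real^2 \<Rightarrow> real^3) \<Rightarrow> real^2 \<Rightarrow> real^2^3" where
  "jac f u = matrix (frechet_derivative f (at u))"

text \<open>Tangent moving basis Omega = (w1 w2) of x, chosen so that xi = w1 \<times> w2 / |w1 \<times> w2|.\<close>
definition tangent_moving_basis :: "(real^2) set \<Rightarrow> (real^2 \<Rightarrow> real^3) \<Rightarrow> (real^2 \<Rightarrow> real^3)
     \<Rightarrow> (real^2 \<Rightarrow> real^2^3) \<Rightarrow> bool" where
  "tangent_moving_basis U x \<xi> \<Omega> \<longleftrightarrow> smooth_on U \<Omega> \<and>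
     (\<forall>u\<in>U. (\<forall>a b. a *\<^sub>R column 1 (\<Omega> u) + b *\<^sub>R column 2 (\<Omega> u) = 0 \<longrightarrow> a = 0 \<and> b = 0) \<and>
        (\<forall>i\<in>Basis. frechet_derivative x (at u) i \<in> span {column 1 (\<Omega> u), column 2 (\<Omega> u)}) \<and>
        \<xi> u = (1 / norm (cross3 (column 1 (\<Omega> u)) (column 2 (\<Omega> u)))) *\<^sub>R (cross3 (column 1 (\<Omega> u)) (column 2 (\<Omega> u))))"

text \<open>Adjugate of a 2x2 matrix and the matrix P.\<close>
definition adj2 :: "real^2^2 \<Rightarrow> real^2^2" where
  "adj2 A = vector [vector [A$2$2, - A$1$2], vector [- A$2$1, A$1$1]]"

definition Pmat :: "real^2^2" where
  "Pmat = vector [vector [0, 1], vector [-1, 0]]"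

text \<open>Line of curvature of the frontal x (w.r.t. Omega, Lambda, Delta with
  Dx = Omega Lambda^T, Dxi = Omega Delta^T).\<close>
definition alpha_mat :: "(real^2 \<Rightarrow> real^2^3) \<Rightarrow> (real^2 \<Rightarrow> real^3) \<Rightarrow> (real^2 \<Rightarrow> real^2^2)
     \<Rightarrow> real^2 \<Rightarrow> real^2^2" where
  "alpha_mat \<Omega> \<xi> \<Lambda> u =
     (let I = transpose (\<Omega> u) ** \<Omega> u;
          II = - (transpose (\<Omega> u) ** jac \<xi> u);
          \<mu> = - (transpose II ** matrix_inv I)
      in \<mu> ** adj2 (\<Lambda> u))"

definition line_of_curvature :: "(real^2 \<Rightarrow> real^2^3) \<Rightarrow> (real^2 \<Rightarrow> real^3) \<Rightarrow> (real^2 \<Rightarrow> real^2^2)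
     \<Rightarrow> real set \<Rightarrow> (real \<Rightarrow> real^2) \<Rightarrow> bool" where
  "line_of_curvature \<Omega> \<xi> \<Lambda> I \<gamma> \<longleftrightarrow>
     (\<forall>t\<in>I. det (\<Lambda> (\<gamma> t)) *
        (vector_derivative \<gamma> (at t) \<bullet>
          ((Pmat ** transpose (alpha_mat \<Omega> \<xi> \<Lambda> (\<gamma> t))) *v vector_derivative \<gamma> (at t))) = 0)"

text \<open>Kummer's function K_q^Omega(b).\<close>
definition kummer_K :: "(real^2 \<Rightarrow> real^2^3) \<Rightarrow> (real^2 \<Rightarrow> real^3) \<Rightarrow> (real^2 \<Rightarrow> real^2^2)
     \<Rightarrow> real^2 \<Rightarrow> real^2 \<Rightarrow> real" where
  "kummer_K \<Omega> x \<Delta> q b =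
     (let I = transpose (\<Omega> q) ** \<Omega> q;
          II = - (transpose (\<Omega> q) ** jac x q)
      in (b \<bullet> ((II ** adj2 (transpose (\<Delta> q))) *v b)) / (b \<bullet> (I *v b)))"

definition kummer_principal_line :: "(real^2 \<Rightarrow> real^2^3) \<Rightarrow> (real^2 \<Rightarrow> real^3) \<Rightarrow> (real^2 \<Rightarrow> real^2^2)
     \<Rightarrow> real set \<Rightarrow> (real \<Rightarrow> real^2) \<Rightarrow> bool" where
  "kummer_principal_line \<Omega> x \<Delta> I \<gamma> \<longleftrightarrow>
     (\<forall>t\<in>I. let q = \<gamma> t; b = transpose (\<Delta> q) *v vector_derivative \<gamma> (at t) in
        b \<noteq> 0 \<longrightarrow>
          ((\<forall>c. c \<noteq> 0 \<longrightarrow> kummer_K \<Omega> x \<Delta> q c \<le> kummer_K \<Omega> x \<Delta> q b) \<or>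
           (\<forall>c. c \<noteq> 0 \<longrightarrow> kummer_K \<Omega> x \<Delta> q b \<le> kummer_K \<Omega> x \<Delta> q c)))"

end

theory Submission
  imports Defs
begin

definition Qf :: "real \<Rightarrow> real \<Rightarrow> real \<Rightarrow> real^2 \<Rightarrow> real" where
  "Qf a h k c = a * (c$1)^2 + 2 * h * (c$1) * (c$2) + k * (c$2)^2"

lemma vec2_nz: "(c::real^2) \<noteq> 0 \<longleftrightarrow> c$1 \<noteq> 0 \<or> c$2 \<noteq> 0"
  by (auto simp: vec_eq_iff forall_2)

lemma quad_zero:
  fixes \<beta> m :: real
  assumes "\<And>t. 2*t*\<beta> + t^2*m \<le> 0"
  shows "\<beta> = 0"
proof (rule ccontr)
  assume nz: "\<beta> \<noteq> 0"
  define s where "s = \<bar>m\<bar> + 1"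
  have s: "s > 0" by (simp add: s_def)
  have "2*(\<beta>/s)*\<beta> + (\<beta>/s)^2*m \<le> 0" by (rule assms)
  then have "(2*(\<beta>/s)*\<beta> + (\<beta>/s)^2*m) * s^2 \<le> 0" by (simp add: mult_nonpos_nonneg)
  moreover have "(2*(\<beta>/s)*\<beta> + (\<beta>/s)^2*m) * s^2 = \<beta>^2 * (2 * s + m)"
    using s by (simp add: field_simps power2_eq_square)
  moreover have "2 * s + m > 0" unfolding s_def by (cases "m \<ge> 0") auto
  moreover have "\<beta>^2 > 0" using nz by simp
  ultimately show False by (metis mult_pos_pos not_le)
qed

lemma extreme_iff:
  fixes a h k p q r :: real and b :: "real^2"
  assumes pos: "\<And>c::real^2. c \<noteq> 0 \<Longrightarrow> Qf p q r c > 0"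
    and bnz: "b \<noteq> 0"
  shows "((\<forall>c. c \<noteq> 0 \<longrightarrow> Qf a h k c / Qf p q r c \<le> Qf a h k b / Qf p q r b) \<or>
          (\<forall>c. c \<noteq> 0 \<longrightarrow> Qf a h k b / Qf p q r b \<le> Qf a h k c / Qf p q r c))
     \<longleftrightarrow> (a*b$1 + h*b$2)*(q*b$1 + r*b$2) - (h*b$1 + k*b$2)*(p*b$1 + q*b$2) = 0"
proof -
  define \<kappa> where "\<kappa> = Qf a h k b / Qf p q r b"
  have Db: "Qf p q r b > 0" using pos bnz by blast
  define m11 m12 m22 where "m11 = a - \<kappa>*p" and "m12 = h - \<kappa>*q" and "m22 = k - \<kappa>*r"
  have Mc: "Qf a h k c - \<kappa> * Qf p q r c = Qf m11 m12 m22 c" for c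
    by (simp add: Qf_def m11_def m12_def m22_def algebra_simps)
  have Mb: "Qf m11 m12 m22 b = 0"
    using Mc[of b] Db by (simp add: \<kappa>_def)
  have le_iff: "Qf a h k c / Qf p q r c \<le> \<kappa> \<longleftrightarrow> Qf m11 m12 m22 c \<le> 0" if "c \<noteq> 0" for c
  proof -
    have "Qf p q r c > 0" using pos that by blast
    then have "Qf a h k c / Qf p q r c \<le> \<kappa> \<longleftrightarrow> Qf a h k c \<le> \<kappa> * Qf p q r c" by (simp add: divide_le_eq)
    then show ?thesis using Mc[of c] by linarith
  qed
  have ge_iff: "\<kappa> \<le> Qf a h k c / Qf p q r c \<longleftrightarrow> 0 \<le> Qf m11 m12 m22 c" if "c \<noteq> 0" for c
  proof -
    have "Qf p q r c > 0" using pos that by blast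
    then have "\<kappa> \<le> Qf a h k c / Qf p q r c \<longleftrightarrow> \<kappa> * Qf p q r c \<le> Qf a h k c" by (simp add: le_divide_eq)
    then show ?thesis using Mc[of c] by linarith
  qed
  have Qf0: "Qf m11 m12 m22 0 = 0" by (simp add: Qf_def)
  have shift1: "Qf m11 m12 m22 (b + t *\<^sub>R vector [1,0]) = 2*t*(m11*b$1 + m12*b$2) + t^2*m11" for t
    using Mb by (simp add: Qf_def algebra_simps power2_eq_square)
  have shift2: "Qf m11 m12 m22 (b + t *\<^sub>R vector [0,1]) = 2*t*(m12*b$1 + m22*b$2) + t^2*m22" for t
    using Mb by (simp add: Qf_def algebra_simps power2_eq_square)
  have crit_iff: "(a*b$1 + h*b$2)*(q*b$1 + r*b$2) - (h*b$1 + k*b$2)*(p*b$1 + q*b$2) = 0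
      \<longleftrightarrow> (m11*b$1 + m12*b$2 = 0 \<and> m12*b$1 + m22*b$2 = 0)"
  proof
    assume cr: "(a*b$1 + h*b$2)*(q*b$1 + r*b$2) - (h*b$1 + k*b$2)*(p*b$1 + q*b$2) = 0"
    define w1 w2 g1 g2 where "w1 = m11*b$1 + m12*b$2" and "w2 = m12*b$1 + m22*b$2"
      and "g1 = p*b$1 + q*b$2" and "g2 = q*b$1 + r*b$2"
    have c1: "w1*g2 - w2*g1 = 0" using cr by (simp add: w1_def w2_def g1_def g2_def m11_def m12_def m22_def algebra_simps)
    have c2: "w1*b$1 + w2*b$2 = 0" using Mb by (simp add: w1_def w2_def Qf_def algebra_simps power2_eq_square)
    have c3: "g1*b$1 + g2*b$2 = Qf p q r b" by (simp add: g1_def g2_def Qf_def algebra_simps power2_eq_square)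
    have "w1 * Qf p q r b = g1*(w1*b$1 + w2*b$2)" using c1 c3[symmetric] by (simp add: algebra_simps)
    then have "w1 = 0" using c2 Db by simp
    moreover have "w2 * Qf p q r b = g2*(w1*b$1 + w2*b$2)" using c1 c3[symmetric] by (simp add: algebra_simps)
    then have "w2 = 0" using c2 Db by simp
    ultimately show "m11*b$1 + m12*b$2 = 0 \<and> m12*b$1 + m22*b$2 = 0" by (simp add: w1_def w2_def)
  next
    assume "m11*b$1 + m12*b$2 = 0 \<and> m12*b$1 + m22*b$2 = 0"
    moreover have "(a*b$1 + h*b$2)*(q*b$1 + r*b$2) - (h*b$1 + k*b$2)*(p*b$1 + q*b$2)
       = (m11*b$1 + m12*b$2)*(q*b$1 + r*b$2) - (m12*b$1 + m22*b$2)*(p*b$1 + q*b$2)"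
      unfolding m11_def m12_def m22_def by (simp add: algebra_simps)
    ultimately show "(a*b$1 + h*b$2)*(q*b$1 + r*b$2) - (h*b$1 + k*b$2)*(p*b$1 + q*b$2) = 0"
      by simp
  qed
  show ?thesis
  proof
    assume "(\<forall>c. c \<noteq> 0 \<longrightarrow> Qf a h k c / Qf p q r c \<le> Qf a h k b / Qf p q r b) \<or>
          (\<forall>c. c \<noteq> 0 \<longrightarrow> Qf a h k b / Qf p q r b \<le> Qf a h k c / Qf p q r c)"
    then show "(a*b$1 + h*b$2)*(q*b$1 + r*b$2) - (h*b$1 + k*b$2)*(p*b$1 + q*b$2) = 0"
    proof
      assume H: "\<forall>c. c \<noteq> 0 \<longrightarrow> Qf a h k c / Qf p q r c \<le> Qf a h k b / Qf p q r b"
      have N: "Qf m11 m12 m22 c \<le> 0" for c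
        using H le_iff[of c] Qf0 unfolding \<kappa>_def[symmetric] by (cases "c = 0") auto
      have "m11*b$1 + m12*b$2 = 0" by (rule quad_zero[of _ m11]) (metis N shift1)
      moreover have "m12*b$1 + m22*b$2 = 0" by (rule quad_zero[of _ m22]) (metis N shift2)
      ultimately show ?thesis using crit_iff by blast
    next
      assume H: "\<forall>c. c \<noteq> 0 \<longrightarrow> Qf a h k b / Qf p q r b \<le> Qf a h k c / Qf p q r c"
      have N: "0 \<le> Qf m11 m12 m22 c" for c
        using H ge_iff[of c] Qf0 unfolding \<kappa>_def[symmetric] by (cases "c = 0") auto
      have "-(m11*b$1 + m12*b$2) = 0"
        by (rule quad_zero[of _ "-m11"]) (metis N shift1 neg_le_0_iff_le minus_add_distrib mult_minus_right)
      moreover have "-(m12*b$1 + m22*b$2) = 0"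
        by (rule quad_zero[of _ "-m22"]) (metis N shift2 neg_le_0_iff_le minus_add_distrib mult_minus_right)
      ultimately show ?thesis using crit_iff by simp
    qed
  next
    assume "(a*b$1 + h*b$2)*(q*b$1 + r*b$2) - (h*b$1 + k*b$2)*(p*b$1 + q*b$2) = 0"
    then have e1: "m11*b$1 + m12*b$2 = 0" and e2: "m12*b$1 + m22*b$2 = 0" using crit_iff by auto
    have "(m11*m22 - m12^2) * b$1 = 0"
    proof -
      have "(m11*m22 - m12^2) * b$1 = m22*(m11*b$1 + m12*b$2) - m12*(m12*b$1 + m22*b$2)"
        by (simp add: algebra_simps power2_eq_square)
      then show ?thesis using e1 e2 by simp
    qed
    moreover have "(m11*m22 - m12^2) * b$2 = 0"
    proof -
      have "(m11*m22 - m12^2) * b$2 = m11*(m12*b$1 + m22*b$2) - m12*(m11*b$1 + m12*b$2)"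
        by (simp add: algebra_simps power2_eq_square)
      then show ?thesis using e1 e2 by simp
    qed
    ultimately have dM: "m11*m22 = m12^2" using bnz by (auto simp: vec2_nz)
    have sq: "m11 * Qf m11 m12 m22 c = (m11*c$1 + m12*c$2)^2" for c
      using dM by (simp add: Qf_def algebra_simps power2_eq_square)
    consider "m11 > 0" | "m11 < 0" | "m11 = 0 \<and> m22 \<ge> 0" | "m11 = 0 \<and> m22 < 0" by linarith
    then show "(\<forall>c. c \<noteq> 0 \<longrightarrow> Qf a h k c / Qf p q r c \<le> Qf a h k b / Qf p q r b) \<or>
          (\<forall>c. c \<noteq> 0 \<longrightarrow> Qf a h k b / Qf p q r b \<le> Qf a h k c / Qf p q r c)"
    proof cases
      case 1
      have "0 \<le> Qf m11 m12 m22 c" for c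
        using sq[of c] 1 by (metis zero_le_power2 zero_le_mult_iff not_le)
      then show ?thesis using ge_iff unfolding \<kappa>_def by blast
    next
      case 2
      have "Qf m11 m12 m22 c \<le> 0" for c
        using sq[of c] 2 by (metis zero_le_power2 mult_neg_pos not_le)
      then show ?thesis using le_iff unfolding \<kappa>_def by blast
    next
      case 3
      then have "m12 = 0" using dM by simp
      then have "0 \<le> Qf m11 m12 m22 c" for c using 3 by (simp add: Qf_def)
      then show ?thesis using ge_iff unfolding \<kappa>_def by blast
    next
      case 4
      then have "m12 = 0" using dM by simp
      then have "Qf m11 m12 m22 c \<le> 0" for c using 4 by (simp add: Qf_def mult_nonpos_nonneg)
      then show ?thesis using le_iff unfolding \<kappa>_def by blast
    qed
  qed
qed


lemma crit_identity:
  fixes g L D :: "real^2^2" and v :: "real^2"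
  assumes gs: "g$2$1 = g$1$2"
  defines "N \<equiv> (- (g ** transpose L)) ** adj2 (transpose D)"
  defines "b \<equiv> transpose D *v v"
  shows "2 * ((N$1$1*b$1 + ((N$1$2+N$2$1)/2)*b$2)*(g$1$2*b$1 + g$2$2*b$2)
             - (((N$1$2+N$2$1)/2)*b$1 + N$2$2*b$2)*(g$1$1*b$1 + g$1$2*b$2))
    = ((L ** g ** transpose D)$1$2 - (L ** g ** transpose D)$2$1) * (- (b \<bullet> (g *v b)))
      - 2 * det D * det g * (v \<bullet> ((L ** Pmat ** transpose D) *v v))"
  unfolding N_def b_def
  apply (simp add: gs det_2 adj2_def Pmat_def matrix_matrix_mult_def matrix_vector_mult_def sum_2 inner_vec_def transpose_def)
  by (simp add: field_simps)


lemma pointwise: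
  fixes g L D :: "real^2^2" and v :: "real^2"
  assumes gs: "g$2$1 = g$1$2"
    and pos: "\<And>c. c \<noteq> 0 \<Longrightarrow> c \<bullet> (g *v c) > 0"
    and detg: "det g \<noteq> 0"
    and sym: "(L ** g ** transpose D)$1$2 = (L ** g ** transpose D)$2$1"
    and sing: "det L = 0 \<longleftrightarrow> det D = 0"
  defines "KK \<equiv> \<lambda>c. (c \<bullet> (((- (g ** transpose L)) ** adj2 (transpose D)) *v c)) / (c \<bullet> (g *v c))"
  shows "(transpose D *v v \<noteq> 0 \<longrightarrow>
            ((\<forall>c. c \<noteq> 0 \<longrightarrow> KK c \<le> KK (transpose D *v v)) \<or>
             (\<forall>c. c \<noteq> 0 \<longrightarrow> KK (transpose D *v v) \<le> KK c)))
     \<longleftrightarrow> det L * (v \<bullet> ((Pmat ** transpose (D ** adj2 L)) *v v)) = 0"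
proof -
  define N where "N = (- (g ** transpose L)) ** adj2 (transpose D)"
  define b where "b = transpose D *v v"
  define E where "E = v \<bullet> ((L ** Pmat ** transpose D) *v v)"
  have numer: "c \<bullet> (N *v c) = Qf (N$1$1) ((N$1$2+N$2$1)/2) (N$2$2) c" for c
    by (simp add: Qf_def matrix_vector_mult_def sum_2 inner_vec_def field_simps power2_eq_square)
  have denom: "c \<bullet> (g *v c) = Qf (g$1$1) (g$1$2) (g$2$2) c" for c
    by (simp add: Qf_def matrix_vector_mult_def sum_2 inner_vec_def gs field_simps power2_eq_square)
  have KKq: "KK c = Qf (N$1$1) ((N$1$2+N$2$1)/2) (N$2$2) c / Qf (g$1$1) (g$1$2) (g$2$2) c" for c
    unfolding KK_def N_def[symmetric] numer denom ..
  have posQ: "c \<noteq> 0 \<Longrightarrow> Qf (g$1$1) (g$1$2) (g$2$2) c > 0" for c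
    using pos[of c] denom[of c] by simp
  have crit: "2 * ((N$1$1*b$1 + ((N$1$2+N$2$1)/2)*b$2)*(g$1$2*b$1 + g$2$2*b$2)
             - (((N$1$2+N$2$1)/2)*b$1 + N$2$2*b$2)*(g$1$1*b$1 + g$1$2*b$2))
        = - 2 * det D * det g * E"
    using crit_identity[OF gs, of L D v] sym unfolding N_def b_def E_def by simp
  have LOC: "v \<bullet> ((Pmat ** transpose (D ** adj2 L)) *v v) = E"
    unfolding E_def
    by (simp add: adj2_def Pmat_def matrix_matrix_mult_def matrix_vector_mult_def sum_2 inner_vec_def transpose_def algebra_simps)
  have Eb: "b = 0 \<Longrightarrow> E = 0"
  proof -
    assume "b = 0"
    have "E = v \<bullet> ((L ** Pmat) *v b)"
      unfolding E_def b_def by (metis matrix_vector_mul_assoc matrix_mul_assoc)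
    then show "E = 0" using \<open>b = 0\<close> by simp
  qed
  have ext: "b \<noteq> 0 \<Longrightarrow> ((\<forall>c. c \<noteq> 0 \<longrightarrow> KK c \<le> KK b) \<or> (\<forall>c. c \<noteq> 0 \<longrightarrow> KK b \<le> KK c))
      \<longleftrightarrow> det D * det g * E = 0"
    unfolding KKq using extreme_iff[OF posQ, of b "N$1$1" "(N$1$2+N$2$1)/2" "N$2$2"] crit by auto
  show ?thesis
    unfolding b_def[symmetric] LOC
  proof (cases "det L = 0")
    case True
    then have "det D = 0" using sing by simp
    then show "(b \<noteq> 0 \<longrightarrow> (\<forall>c. c \<noteq> 0 \<longrightarrow> KK c \<le> KK b) \<or> (\<forall>c. c \<noteq> 0 \<longrightarrow> KK b \<le> KK c)) \<longleftrightarrow> det L * E = 0"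
      using ext True by simp
  next
    case False
    then have "det D \<noteq> 0" using sing by simp
    then show "(b \<noteq> 0 \<longrightarrow> (\<forall>c. c \<noteq> 0 \<longrightarrow> KK c \<le> KK b) \<or> (\<forall>c. c \<noteq> 0 \<longrightarrow> KK b \<le> KK c)) \<longleftrightarrow> det L * E = 0"
      using ext False detg Eb by auto
  qed
qed

lemma schwarz:
  fixes f fa fb fab fba :: "'v::real_normed_vector \<Rightarrow> real" and a b u :: 'v
  assumes U: "open U" "u \<in> U"
    and d1: "\<And>p s. p + s *\<^sub>R a \<in> U \<Longrightarrow> ((\<lambda>t. f (p + t *\<^sub>R a)) has_real_derivative fa (p + s *\<^sub>R a)) (at s)"
    and d2: "\<And>p s. p + s *\<^sub>R b \<in> U \<Longrightarrow> ((\<lambda>t. f (p + t *\<^sub>R b)) has_real_derivative fb (p + s *\<^sub>R b)) (at s)"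
    and d12: "\<And>p s. p + s *\<^sub>R b \<in> U \<Longrightarrow> ((\<lambda>t. fa (p + t *\<^sub>R b)) has_real_derivative fab (p + s *\<^sub>R b)) (at s)"
    and d21: "\<And>p s. p + s *\<^sub>R a \<in> U \<Longrightarrow> ((\<lambda>t. fb (p + t *\<^sub>R a)) has_real_derivative fba (p + s *\<^sub>R a)) (at s)"
    and c12: "continuous (at u) fab" and c21: "continuous (at u) fba"
  shows "fab u = fba u"
proof -
  obtain r where r: "r > 0" "ball u r \<subseteq> U" using U open_contains_ball by blast
  define K where "K = norm a + norm b + 1"
  have K: "K > 0" unfolding K_def by (simp add: add_nonneg_pos)
  have inU: "u + s *\<^sub>R a + t *\<^sub>R b \<in> U" if "0 \<le> s" "s \<le> h" "0 \<le> t" "t \<le> h" "h * K < r" for s t h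
  proof -
    have "norm (s *\<^sub>R a + t *\<^sub>R b) \<le> norm (s *\<^sub>R a) + norm (t *\<^sub>R b)"
      by (rule norm_triangle_ineq)
    also have "\<dots> = s * norm a + t * norm b" using that by simp
    also have "\<dots> \<le> h * norm a + h * norm b"
      using that by (intro add_mono mult_right_mono) auto
    also have "\<dots> < r"
    proof -
      have "h * norm a + h * norm b \<le> h * K" using that unfolding K_def by (simp add: distrib_left)
      then show ?thesis using that(5) by linarith
    qed
    finally have nr: "norm (s *\<^sub>R a + t *\<^sub>R b) < r" .
    have "dist u (u + (s *\<^sub>R a + t *\<^sub>R b)) = norm (s *\<^sub>R a + t *\<^sub>R b)"
      by (metis add_diff_cancel_left' dist_commute dist_norm)
    then have "u + (s *\<^sub>R a + t *\<^sub>R b) \<in> ball u r" using nr by simp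
    then show ?thesis using r(2) by (auto simp: add.assoc)
  qed
  have claim: "\<exists>p p'. dist p u \<le> h * K \<and> dist p' u \<le> h * K \<and> fab p = fba p'" if h: "0 < h" "h * K < r" for h
  proof -
    have nrm: "dist (u + s *\<^sub>R a + t *\<^sub>R b) u \<le> h * K" if "0 \<le> s" "s \<le> h" "0 \<le> t" "t \<le> h" for s t
    proof -
      have "dist (u + s *\<^sub>R a + t *\<^sub>R b) u = norm (s *\<^sub>R a + t *\<^sub>R b)" by (simp add: dist_norm)
      also have "\<dots> \<le> norm (s *\<^sub>R a) + norm (t *\<^sub>R b)"
        by (rule norm_triangle_ineq)
      also have "\<dots> = s * norm a + t * norm b" using that by simp
      also have "\<dots> \<le> h * norm a + h * norm b"
        using that by (intro add_mono mult_right_mono) auto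
      also have "\<dots> \<le> h * K" using h unfolding K_def by (simp add: distrib_left)
      finally show ?thesis .
    qed
    define G where "G s = f (u + h *\<^sub>R b + s *\<^sub>R a) - f (u + s *\<^sub>R a)" for s
    have "\<exists>z. 0 < z \<and> z < h \<and> G h - G 0 = (h - 0) * (fa (u + h *\<^sub>R b + z *\<^sub>R a) - fa (u + z *\<^sub>R a))"
    proof (rule MVT2[OF h(1)])
      fix s assume s: "0 \<le> s" "s \<le> h"
      have A: "u + h *\<^sub>R b + s *\<^sub>R a \<in> U" using inU[OF s order_less_imp_le[OF h(1)] order_refl h(2)]
        by (simp add: add_ac)
      have B: "u + s *\<^sub>R a \<in> U" using inU[OF s order_refl order_less_imp_le[OF h(1)] h(2)] by simp
      show "(G has_real_derivative (fa (u + h *\<^sub>R b + s *\<^sub>R a) - fa (u + s *\<^sub>R a))) (at s)"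
        unfolding G_def by (intro DERIV_diff d1 A B)
    qed
    then obtain \<sigma> where \<sigma>: "0 < \<sigma>" "\<sigma> < h" "G h - G 0 = h * (fa (u + h *\<^sub>R b + \<sigma> *\<^sub>R a) - fa (u + \<sigma> *\<^sub>R a))"
      by auto
    have "\<exists>z. 0 < z \<and> z < h \<and> fa (u + \<sigma> *\<^sub>R a + h *\<^sub>R b) - fa (u + \<sigma> *\<^sub>R a + 0 *\<^sub>R b) = (h - 0) * fab (u + \<sigma> *\<^sub>R a + z *\<^sub>R b)"
    proof (rule MVT2[OF h(1), where f = "\<lambda>t. fa (u + \<sigma> *\<^sub>R a + t *\<^sub>R b)"])
      fix t assume t: "0 \<le> t" "t \<le> h"
      show "((\<lambda>t. fa (u + \<sigma> *\<^sub>R a + t *\<^sub>R b)) has_real_derivative fab (u + \<sigma> *\<^sub>R a + t *\<^sub>R b)) (at t)"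
        using \<sigma> t h by (intro d12 inU) auto
    qed
    then obtain \<tau> where \<tau>: "0 < \<tau>" "\<tau> < h" "fa (u + \<sigma> *\<^sub>R a + h *\<^sub>R b) - fa (u + \<sigma> *\<^sub>R a) = h * fab (u + \<sigma> *\<^sub>R a + \<tau> *\<^sub>R b)"
      by auto
    have D1: "G h - G 0 = h * h * fab (u + \<sigma> *\<^sub>R a + \<tau> *\<^sub>R b)"
      using \<sigma>(3) \<tau>(3) by (simp add: add_ac)
    define H where "H t = f (u + h *\<^sub>R a + t *\<^sub>R b) - f (u + t *\<^sub>R b)" for t
    have "\<exists>z. 0 < z \<and> z < h \<and> H h - H 0 = (h - 0) * (fb (u + h *\<^sub>R a + z *\<^sub>R b) - fb (u + z *\<^sub>R b))"
    proof (rule MVT2[OF h(1)])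
      fix s assume s: "0 \<le> s" "s \<le> h"
      have A: "u + h *\<^sub>R a + s *\<^sub>R b \<in> U" using inU[OF order_less_imp_le[OF h(1)] order_refl s h(2)] by simp
      have B: "u + s *\<^sub>R b \<in> U" using inU[OF order_refl order_less_imp_le[OF h(1)] s h(2)] by simp
      show "(H has_real_derivative (fb (u + h *\<^sub>R a + s *\<^sub>R b) - fb (u + s *\<^sub>R b))) (at s)"
        unfolding H_def by (intro DERIV_diff d2 A B)
    qed
    then obtain \<sigma>' where \<sigma>': "0 < \<sigma>'" "\<sigma>' < h" "H h - H 0 = h * (fb (u + h *\<^sub>R a + \<sigma>' *\<^sub>R b) - fb (u + \<sigma>' *\<^sub>R b))"
      by auto
    have "\<exists>z. 0 < z \<and> z < h \<and> fb (u + \<sigma>' *\<^sub>R b + h *\<^sub>R a) - fb (u + \<sigma>' *\<^sub>R b + 0 *\<^sub>R a) = (h - 0) * fba (u + \<sigma>' *\<^sub>R b + z *\<^sub>R a)"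
    proof (rule MVT2[OF h(1), where f = "\<lambda>t. fb (u + \<sigma>' *\<^sub>R b + t *\<^sub>R a)"])
      fix t assume t: "0 \<le> t" "t \<le> h"
      have "u + t *\<^sub>R a + \<sigma>' *\<^sub>R b \<in> U" using \<sigma>' t h by (intro inU) auto
      then show "((\<lambda>t. fb (u + \<sigma>' *\<^sub>R b + t *\<^sub>R a)) has_real_derivative fba (u + \<sigma>' *\<^sub>R b + t *\<^sub>R a)) (at t)"
        by (intro d21) (simp add: add_ac)
    qed
    then obtain \<tau>' where \<tau>': "0 < \<tau>'" "\<tau>' < h" "fb (u + \<sigma>' *\<^sub>R b + h *\<^sub>R a) - fb (u + \<sigma>' *\<^sub>R b) = h * fba (u + \<sigma>' *\<^sub>R b + \<tau>' *\<^sub>R a)"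
      by auto
    have D2: "H h - H 0 = h * h * fba (u + \<sigma>' *\<^sub>R b + \<tau>' *\<^sub>R a)"
      using \<sigma>'(3) \<tau>'(3) by (simp add: add_ac)
    have "G h - G 0 = H h - H 0" unfolding G_def H_def by (simp add: add_ac)
    then have "fab (u + \<sigma> *\<^sub>R a + \<tau> *\<^sub>R b) = fba (u + \<tau>' *\<^sub>R a + \<sigma>' *\<^sub>R b)"
      using D1 D2 h(1) by (simp add: add_ac)
    moreover have "dist (u + \<sigma> *\<^sub>R a + \<tau> *\<^sub>R b) u \<le> h * K" using \<sigma> \<tau> by (intro nrm) auto
    moreover have "dist (u + \<tau>' *\<^sub>R a + \<sigma>' *\<^sub>R b) u \<le> h * K" using \<sigma>' \<tau>' by (intro nrm) auto
    ultimately show ?thesis by blast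
  qed
  show ?thesis
  proof (rule ccontr)
    assume ne: "fab u \<noteq> fba u"
    define e where "e = dist (fab u) (fba u) / 2"
    have e: "e > 0" using ne by (simp add: e_def)
    obtain d1 where d1: "d1 > 0" "\<And>x'. dist x' u < d1 \<Longrightarrow> dist (fab x') (fab u) < e"
      using c12 e unfolding continuous_at_eps_delta by blast
    obtain d2 where d2: "d2 > 0" "\<And>x'. dist x' u < d2 \<Longrightarrow> dist (fba x') (fba u) < e"
      using c21 e unfolding continuous_at_eps_delta by blast
    define m where "m = min r (min d1 d2)"
    have m: "m > 0" using r d1 d2 by (simp add: m_def)
    define h where "h = m / (2 * K)"
    have h: "h > 0" "h * K < m" using m K by (auto simp: h_def field_simps)
    then obtain p p' where pp: "dist p u \<le> h * K" "dist p' u \<le> h * K" "fab p = fba p'"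
      using claim[of h] by (auto simp: m_def)
    have "dist (fab p) (fab u) < e" using d1 pp h by (intro d1(2)) (auto simp: m_def)
    moreover have "dist (fba p') (fba u) < e" using d2 pp h by (intro d2(2)) (auto simp: m_def)
    moreover have "dist (fab u) (fba u) \<le> dist (fab p) (fab u) + dist (fba p') (fba u)"
      using dist_triangle[of "fab u" "fba u" "fab p"] pp(3) by (simp add: dist_commute)
    ultimately show False unfolding e_def by linarith
  qed
qed


lemma line_deriv_inner:
  fixes F :: "'a::real_normed_vector \<Rightarrow> 'b::real_inner"
  assumes "F differentiable (at (p + s *\<^sub>R a))"
  shows "((\<lambda>t. w \<bullet> F (p + t *\<^sub>R a)) has_real_derivative (w \<bullet> frechet_derivative F (at (p + s *\<^sub>R a)) a)) (at s)"
proof -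
  define F' where "F' = frechet_derivative F (at (p + s *\<^sub>R a))"
  have hF: "(F has_derivative F') (at (p + s *\<^sub>R a))"
    using assms unfolding F'_def frechet_derivative_works .
  have bl: "bounded_linear F'" using hF by (rule has_derivative_bounded_linear)
  have L: "((\<lambda>t. p + t *\<^sub>R a) has_derivative (\<lambda>h. h *\<^sub>R a)) (at s)"
    by (auto intro!: derivative_eq_intros)
  have C: "((\<lambda>t. F (p + t *\<^sub>R a)) has_derivative (\<lambda>h. F' (h *\<^sub>R a))) (at s)"
    using has_derivative_compose[OF L hF] .
  have C2: "((\<lambda>t. w \<bullet> F (p + t *\<^sub>R a)) has_derivative (\<lambda>h. w \<bullet> F' (h *\<^sub>R a))) (at s)"
    using bounded_linear.has_derivative[OF bounded_linear_inner_right C] .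
  have eq: "(\<lambda>h. w \<bullet> F' (h *\<^sub>R a)) = (\<lambda>h. (w \<bullet> F' a) * h)"
    using linear_scale[OF bounded_linear.linear[OF bl]] by (simp add: mult.commute)
  show ?thesis
    unfolding has_field_derivative_def F'_def[symmetric] using C2 unfolding eq by simp
qed

lemma normal_deriv:
  fixes \<xi> X :: "'a::real_normed_vector \<Rightarrow> 'b::real_inner"
  assumes "open U" "u \<in> U" "\<xi> differentiable (at u)" "X differentiable (at u)"
    and "\<And>w. w \<in> U \<Longrightarrow> \<xi> w \<bullet> X w = 0"
  shows "frechet_derivative \<xi> (at u) e \<bullet> X u + \<xi> u \<bullet> frechet_derivative X (at u) e = 0"
proof -
  have h1: "(\<xi> has_derivative frechet_derivative \<xi> (at u)) (at u)" using assms(3) frechet_derivative_works by blast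
  have h2: "(X has_derivative frechet_derivative X (at u)) (at u)" using assms(4) frechet_derivative_works by blast
  have P: "((\<lambda>w. \<xi> w \<bullet> X w) has_derivative
      (\<lambda>h. \<xi> u \<bullet> frechet_derivative X (at u) h + frechet_derivative \<xi> (at u) h \<bullet> X u)) (at u)"
    using has_derivative_inner[OF h1 h2] .
  have Z: "((\<lambda>w. \<xi> w \<bullet> X w) has_derivative (\<lambda>h. 0)) (at u)"
    by (rule has_derivative_transform_within_open[of "\<lambda>w. 0" _ u UNIV U]) (use assms in auto)
  have "(\<lambda>h. \<xi> u \<bullet> frechet_derivative X (at u) h + frechet_derivative \<xi> (at u) h \<bullet> X u) = (\<lambda>h. 0)"
    using has_derivative_unique[OF P Z] .
  then have "\<xi> u \<bullet> frechet_derivative X (at u) e + frechet_derivative \<xi> (at u) e \<bullet> X u = 0"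
    by (metis (mono_tags))
  then show ?thesis by (simp add: add.commute)
qed


lemma smooth_C2:
  assumes "smooth_on U f"
  shows "\<forall>u\<in>U. f differentiable (at u)"
    and "\<And>i. i \<in> Basis \<Longrightarrow> \<forall>u\<in>U. (\<lambda>w. frechet_derivative f (at w) i) differentiable (at u)"
    and "\<And>i j. i \<in> Basis \<Longrightarrow> j \<in> Basis \<Longrightarrow>
           continuous_on U (\<lambda>u. frechet_derivative (\<lambda>w. frechet_derivative f (at w) i) (at u) j)"
proof -
  have C: "Ck_on (Suc (Suc 0)) U f" using assms unfolding smooth_on_def by blast
  show "\<forall>u\<in>U. f differentiable (at u)" using C by simp
  show "\<And>i. i \<in> Basis \<Longrightarrow> \<forall>u\<in>U. (\<lambda>w. frechet_derivative f (at w) i) differentiable (at u)"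
    using C by simp
  show "\<And>i j. i \<in> Basis \<Longrightarrow> j \<in> Basis \<Longrightarrow>
           continuous_on U (\<lambda>u. frechet_derivative (\<lambda>w. frechet_derivative f (at w) i) (at u) j)"
    using C by simp
qed

lemma second_fund_sym:
  fixes x \<xi> :: "real^2 \<Rightarrow> real^3"
  assumes U: "open U" "u \<in> U" and sx: "smooth_on U x" and s\<xi>: "smooth_on U \<xi>"
    and nrm: "\<forall>w\<in>U. \<forall>i\<in>Basis. \<xi> w \<bullet> frechet_derivative x (at w) i = 0"
  shows "frechet_derivative \<xi> (at u) (axis 2 1) \<bullet> frechet_derivative x (at u) (axis 1 1)
       = frechet_derivative \<xi> (at u) (axis 1 1) \<bullet> frechet_derivative x (at u) (axis 2 1)"
proof -
  define e1 e2 where "e1 = (axis 1 1 :: real^2)" and "e2 = (axis 2 1 :: real^2)"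
  have B: "e1 \<in> Basis" "e2 \<in> Basis" unfolding e1_def e2_def by simp_all
  define X1 X2 where "X1 = (\<lambda>w. frechet_derivative x (at w) e1)" and "X2 = (\<lambda>w. frechet_derivative x (at w) e2)"
  have dx: "\<forall>u\<in>U. x differentiable (at u)" using smooth_C2(1)[OF sx] .
  have d\<xi>: "\<forall>u\<in>U. \<xi> differentiable (at u)" using smooth_C2(1)[OF s\<xi>] .
  have dX1: "\<forall>u\<in>U. X1 differentiable (at u)" using smooth_C2(2)[OF sx B(1)] unfolding X1_def .
  have dX2: "\<forall>u\<in>U. X2 differentiable (at u)" using smooth_C2(2)[OF sx B(2)] unfolding X2_def .
  have cX1: "continuous_on U (\<lambda>u. frechet_derivative X1 (at u) e2)" using smooth_C2(3)[OF sx B(1) B(2)] unfolding X1_def .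
  have cX2: "continuous_on U (\<lambda>u. frechet_derivative X2 (at u) e1)" using smooth_C2(3)[OF sx B(2) B(1)] unfolding X2_def .
  have N1: "frechet_derivative \<xi> (at u) e2 \<bullet> X1 u + \<xi> u \<bullet> frechet_derivative X1 (at u) e2 = 0"
    by (rule normal_deriv[OF U]) (use d\<xi> dX1 U nrm B in \<open>auto simp: X1_def\<close>)
  have N2: "frechet_derivative \<xi> (at u) e1 \<bullet> X2 u + \<xi> u \<bullet> frechet_derivative X2 (at u) e1 = 0"
    by (rule normal_deriv[OF U]) (use d\<xi> dX2 U nrm B in \<open>auto simp: X2_def\<close>)
  define w0 where "w0 = \<xi> u"
  have S: "(\<lambda>p. w0 \<bullet> frechet_derivative X1 (at p) e2) u = (\<lambda>p. w0 \<bullet> frechet_derivative X2 (at p) e1) u"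
  proof (rule schwarz[OF U, where f = "\<lambda>p. w0 \<bullet> x p" and fa = "\<lambda>p. w0 \<bullet> X1 p" and fb = "\<lambda>p. w0 \<bullet> X2 p"
        and a = e1 and b = e2])
    fix p s assume "p + s *\<^sub>R e1 \<in> U"
    then show "((\<lambda>t. w0 \<bullet> x (p + t *\<^sub>R e1)) has_real_derivative w0 \<bullet> X1 (p + s *\<^sub>R e1)) (at s)"
      unfolding X1_def using dx by (intro line_deriv_inner) auto
  next
    fix p s assume "p + s *\<^sub>R e2 \<in> U"
    then show "((\<lambda>t. w0 \<bullet> x (p + t *\<^sub>R e2)) has_real_derivative w0 \<bullet> X2 (p + s *\<^sub>R e2)) (at s)"
      unfolding X2_def using dx by (intro line_deriv_inner) auto
  next
    fix p s assume "p + s *\<^sub>R e2 \<in> U"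
    then show "((\<lambda>t. w0 \<bullet> X1 (p + t *\<^sub>R e2)) has_real_derivative w0 \<bullet> frechet_derivative X1 (at (p + s *\<^sub>R e2)) e2) (at s)"
      using dX1 by (intro line_deriv_inner) auto
  next
    fix p s assume "p + s *\<^sub>R e1 \<in> U"
    then show "((\<lambda>t. w0 \<bullet> X2 (p + t *\<^sub>R e1)) has_real_derivative w0 \<bullet> frechet_derivative X2 (at (p + s *\<^sub>R e1)) e1) (at s)"
      using dX2 by (intro line_deriv_inner) auto
  next
    have "continuous (at u) (\<lambda>u. frechet_derivative X1 (at u) e2)"
      using cX1 U continuous_on_eq_continuous_at by blast
    then show "continuous (at u) (\<lambda>p. w0 \<bullet> frechet_derivative X1 (at p) e2)"
      by (intro continuous_intros)
  next
    have "continuous (at u) (\<lambda>u. frechet_derivative X2 (at u) e1)"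
      using cX2 U continuous_on_eq_continuous_at by blast
    then show "continuous (at u) (\<lambda>p. w0 \<bullet> frechet_derivative X2 (at p) e1)"
      by (intro continuous_intros)
  qed
  have "frechet_derivative \<xi> (at u) e2 \<bullet> X1 u = frechet_derivative \<xi> (at u) e1 \<bullet> X2 u"
    using N1 N2 S unfolding w0_def by simp
  then show ?thesis unfolding X1_def X2_def e1_def e2_def .
qed


lemma col_inner:
  fixes A B :: "real^'n^'m"
  shows "(A *v axis i 1) \<bullet> (B *v axis j 1) = (transpose A ** B)$i$j"
  by (simp add: matrix_vector_mult_basis column_def inner_vec_def matrix_matrix_mult_def transpose_def)

lemma transpose_uminus: "transpose (- (A::real^'n^'m)) = - transpose A"
  by (simp add: transpose_def vec_eq_iff)

lemma matrix_mul_uminus_left: "(- (A::real^'n^'m)) ** B = - (A ** B)"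
  by (simp add: matrix_matrix_mult_def vec_eq_iff sum_negf)

lemma matrix_inv_right':
  fixes A :: "real^'n^'n"
  assumes "invertible A"
  shows "A ** matrix_inv A = mat 1"
proof -
  have "\<exists>A'. A ** A' = mat 1 \<and> A' ** A = mat 1" using assms unfolding invertible_def by blast
  then have "A ** matrix_inv A = mat 1 \<and> matrix_inv A ** A = mat 1"
    unfolding matrix_inv_def by (rule someI_ex)
  then show ?thesis by blast
qed

lemma inner_gram: "c \<bullet> ((transpose W ** W) *v c) = (W *v c) \<bullet> ((W :: real^'n^'m) *v c)"
proof -
  have "c \<bullet> ((transpose W ** W) *v c) = c \<bullet> (transpose W *v (W *v c))"
    by (simp only: matrix_vector_mul_assoc)
  also have "\<dots> = c \<bullet> ((W *v c) v* W)" by simp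
  also have "\<dots> = ((W *v c) v* W) \<bullet> c" by (rule inner_commute)
  also have "\<dots> = (W *v c) \<bullet> (W *v c)" by (rule dot_lmul_matrix)
  finally show ?thesis .
qed

lemma Wv0:
  fixes W :: "real^2^3"
  assumes ind: "\<forall>a b. a *\<^sub>R column 1 W + b *\<^sub>R column 2 W = 0 \<longrightarrow> a = 0 \<and> b = 0"
    and "W *v y = 0"
  shows "y = 0"
proof -
  have "W *v y = y$1 *\<^sub>R column 1 W + y$2 *\<^sub>R column 2 W"
    by (simp add: matrix_mult_sum sum_2 scalar_mult_eq_scaleR)
  then have "y$1 = 0 \<and> y$2 = 0" using ind assms(2) by metis
  then show ?thesis by (simp add: vec_eq_iff forall_2)
qed

lemma gram_facts:
  fixes W :: "real^2^3"
  assumes ind: "\<forall>a b. a *\<^sub>R column 1 W + b *\<^sub>R column 2 W = 0 \<longrightarrow> a = 0 \<and> b = 0"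
  defines "g \<equiv> transpose W ** W"
  shows "g$2$1 = g$1$2" and "\<And>c. c \<noteq> 0 \<Longrightarrow> c \<bullet> (g *v c) > 0" and "det g \<noteq> 0"
    and "transpose g = g"
proof -
  show "g$2$1 = g$1$2" unfolding g_def by (simp add: matrix_matrix_mult_def transpose_def mult.commute)
  show pos: "\<And>c. c \<noteq> 0 \<Longrightarrow> c \<bullet> (g *v c) > 0"
  proof -
    fix c :: "real^2" assume "c \<noteq> 0"
    then have "W *v c \<noteq> 0" using Wv0[OF ind] by blast
    then show "c \<bullet> (g *v c) > 0" unfolding g_def inner_gram by simp
  qed
  show "det g \<noteq> 0"
  proof
    assume "det g = 0"
    then have "\<not> inj ((*v) g)"
      using det_nz_iff_inj[of "(*v) g"] by simp
    then obtain a b where ab: "a \<noteq> b" "g *v a = g *v b" unfolding inj_def by blast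
    then have "g *v (a - b) = 0" by (simp add: matrix_vector_mult_diff_distrib)
    moreover have "a - b \<noteq> 0" using ab by simp
    ultimately show False using pos[of "a - b"] by simp
  qed
  show "transpose g = g" unfolding g_def by (simp add: matrix_transpose_mul)
qed

lemma singular_iff_det:
  fixes x :: "real^2 \<Rightarrow> real^3" and W :: "real^2^3" and L :: "real^2^2"
  assumes ind: "\<forall>a b. a *\<^sub>R column 1 W + b *\<^sub>R column 2 W = 0 \<longrightarrow> a = 0 \<and> b = 0"
    and dif: "x differentiable (at q)" and jac: "jac x q = W ** transpose L" and q: "q \<in> U"
  shows "q \<in> singular_set U x \<longleftrightarrow> det L = 0"
proof -
  have lin: "linear (frechet_derivative x (at q))"
    using dif frechet_derivative_works has_derivative_linear by blast
  have fd: "frechet_derivative x (at q) = (\<lambda>c. W *v (transpose L *v c))"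
  proof
    fix c
    have "frechet_derivative x (at q) c = jac x q *v c" unfolding jac_def using matrix_works[OF lin[folded linear_matrix_vector_mul_eq]] by simp
    then show "frechet_derivative x (at q) c = W *v (transpose L *v c)" using jac by (metis matrix_vector_mul_assoc)
  qed
  have "inj (\<lambda>c. W *v (transpose L *v c)) \<longleftrightarrow> inj ((*v) (transpose L))"
  proof
    assume "inj (\<lambda>c. W *v (transpose L *v c))"
    then show "inj ((*v) (transpose L))" unfolding inj_def by auto
  next
    assume i: "inj ((*v) (transpose L))"
    show "inj (\<lambda>c. W *v (transpose L *v c))"
    proof (rule injI)
      fix a b assume "W *v (transpose L *v a) = W *v (transpose L *v b)"
      then have "W *v (transpose L *v a - transpose L *v b) = 0" by (simp add: matrix_vector_mult_diff_distrib)
      then have "transpose L *v a - transpose L *v b = 0" using Wv0[OF ind] by blast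
      then show "a = b" using i unfolding inj_def by simp
    qed
  qed
  also have "\<dots> \<longleftrightarrow> det (transpose L) \<noteq> 0"
    using det_nz_iff_inj[of "(*v) (transpose L)"] by simp
  finally have "inj (frechet_derivative x (at q)) \<longleftrightarrow> det L \<noteq> 0" unfolding fd det_transpose .
  moreover have "q \<in> singular_set U x \<longleftrightarrow> \<not> inj (frechet_derivative x (at q))"
    using q by (simp add: singular_set_def)
  ultimately show ?thesis by blast
qed


lemma jac_apply:
  assumes "f differentiable (at q)"
  shows "jac f q *v y = frechet_derivative f (at q) y"
proof -
  have lin: "linear (frechet_derivative f (at q))"
    using assms frechet_derivative_works has_derivative_linear by blast
  show ?thesis unfolding jac_def using matrix_works[OF lin[folded linear_matrix_vector_mul_eq]] .
qed

lemma main_pointwise: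
  fixes U :: "(real^2) set" and x \<xi> :: "real^2 \<Rightarrow> real^3"
    and \<Omega> :: "real^2 \<Rightarrow> real^2^3" and \<Lambda> \<Delta> :: "real^2 \<Rightarrow> real^2^2"
  assumes U: "open U" and q: "q \<in> U"
    and sx: "smooth_on U x"
    and sing: "singular_set U x = singular_set U \<xi>"
    and un: "unit_normal_of U x \<xi>"
    and tmb: "tangent_moving_basis U x \<xi> \<Omega>"
    and jx: "\<forall>u\<in>U. jac x u = \<Omega> u ** transpose (\<Lambda> u)"
    and j\<xi>: "\<forall>u\<in>U. jac \<xi> u = \<Omega> u ** transpose (\<Delta> u)"
  shows "(transpose (\<Delta> q) *v v \<noteq> 0 \<longrightarrow>
            ((\<forall>c. c \<noteq> 0 \<longrightarrow> kummer_K \<Omega> x \<Delta> q c \<le> kummer_K \<Omega> x \<Delta> q (transpose (\<Delta> q) *v v)) \<or>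
             (\<forall>c. c \<noteq> 0 \<longrightarrow> kummer_K \<Omega> x \<Delta> q (transpose (\<Delta> q) *v v) \<le> kummer_K \<Omega> x \<Delta> q c)))
     \<longleftrightarrow> det (\<Lambda> q) * (v \<bullet> ((Pmat ** transpose (alpha_mat \<Omega> \<xi> \<Lambda> q)) *v v)) = 0"
proof -
  define W where "W = \<Omega> q"
  define g where "g = transpose W ** W"
  define L where "L = \<Lambda> q"
  define D where "D = \<Delta> q"
  have s\<xi>: "smooth_on U \<xi>" and nrm: "\<forall>w\<in>U. \<forall>i\<in>Basis. \<xi> w \<bullet> frechet_derivative x (at w) i = 0"
    using un unfolding unit_normal_of_def by auto
  have ind: "\<forall>a b. a *\<^sub>R column 1 W + b *\<^sub>R column 2 W = 0 \<longrightarrow> a = 0 \<and> b = 0"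
    using tmb q unfolding tangent_moving_basis_def W_def by blast
  note gf = gram_facts[OF ind, folded g_def]
  have jxq: "jac x q = W ** transpose L" using jx q unfolding W_def L_def by blast
  have j\<xi>q: "jac \<xi> q = W ** transpose D" using j\<xi> q unfolding W_def D_def by blast
  have dx: "x differentiable (at q)" using smooth_C2(1)[OF sx] q by blast
  have d\<xi>: "\<xi> differentiable (at q)" using smooth_C2(1)[OF s\<xi>] q by blast
  have K_eq: "kummer_K \<Omega> x \<Delta> q = (\<lambda>c. (c \<bullet> (((- (g ** transpose L)) ** adj2 (transpose D)) *v c)) / (c \<bullet> (g *v c)))"
  proof
    fix c
    have "transpose W ** jac x q = g ** transpose L" unfolding jxq g_def by (simp add: matrix_mul_assoc)
    then show "kummer_K \<Omega> x \<Delta> q c = (c \<bullet> (((- (g ** transpose L)) ** adj2 (transpose D)) *v c)) / (c \<bullet> (g *v c))"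
      unfolding kummer_K_def Let_def W_def[symmetric] D_def[symmetric] g_def[symmetric] by simp
  qed
  have A_eq: "alpha_mat \<Omega> \<xi> \<Lambda> q = D ** adj2 L"
  proof -
    have inv: "g ** matrix_inv g = mat 1"
      using matrix_inv_right' gf(3) invertible_det_nz by blast
    have "transpose W ** jac \<xi> q = g ** transpose D" unfolding j\<xi>q g_def by (simp add: matrix_mul_assoc)
    then have "- (transpose (- (transpose W ** jac \<xi> q)) ** matrix_inv g) = D"
      by (simp add: transpose_uminus matrix_mul_uminus_left matrix_transpose_mul gf(4)
          matrix_mul_assoc[symmetric] inv)
    then show ?thesis
      unfolding alpha_mat_def Let_def W_def[symmetric] g_def[symmetric] L_def[symmetric] by simp
  qed
  have sym: "(L ** g ** transpose D)$1$2 = (L ** g ** transpose D)$2$1"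
  proof -
    have T: "transpose (jac x q) ** jac \<xi> q = L ** g ** transpose D"
      unfolding jxq j\<xi>q g_def by (simp add: matrix_transpose_mul matrix_mul_assoc)
    have c: "(L ** g ** transpose D)$i$j = frechet_derivative x (at q) (axis i 1) \<bullet> frechet_derivative \<xi> (at q) (axis j 1)" for i j
      using col_inner[of "jac x q" i "jac \<xi> q" j] unfolding T jac_apply[OF dx] jac_apply[OF d\<xi>] by simp
    have "frechet_derivative \<xi> (at q) (axis 2 1) \<bullet> frechet_derivative x (at q) (axis 1 1)
       = frechet_derivative \<xi> (at q) (axis 1 1) \<bullet> frechet_derivative x (at q) (axis 2 1)"
      by (rule second_fund_sym[OF U q sx s\<xi> nrm])
    then show ?thesis unfolding c by (simp add: inner_commute)
  qed
  have singLD: "det L = 0 \<longleftrightarrow> det D = 0"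
  proof -
    have "q \<in> singular_set U x \<longleftrightarrow> det L = 0" by (rule singular_iff_det[OF ind dx jxq q])
    moreover have "q \<in> singular_set U \<xi> \<longleftrightarrow> det D = 0" by (rule singular_iff_det[OF ind d\<xi> j\<xi>q q])
    ultimately show ?thesis using sing by simp
  qed
  show ?thesis
    unfolding K_eq A_eq L_def[symmetric] D_def[symmetric]
    using pointwise[OF gf(1) gf(2) gf(3) sym singLD, of v] by simp
qed


theorem corollary4p3:
  fixes U :: "(real^2) set" and x \<xi> :: "real^2 \<Rightarrow> real^3"
    and \<Omega> :: "real^2 \<Rightarrow> real^2^3" and \<Lambda> \<Delta> :: "real^2 \<Rightarrow> real^2^2"
    and I :: "real set" and \<gamma> :: "real \<Rightarrow> real^2"
  assumes "open U"
    and "proper_frontal U x" and "proper_frontal U \<xi>"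
    and "singular_set U x = singular_set U \<xi>"
    and "unit_normal_of U x \<xi>"
    and "tangent_moving_basis U x \<xi> \<Omega>"
    and "\<forall>u\<in>U. jac x u = \<Omega> u ** transpose (\<Lambda> u)"
    and "\<forall>u\<in>U. jac \<xi> u = \<Omega> u ** transpose (\<Delta> u)"
    and "open I" and "is_interval I" and "I \<noteq> {}"
    and "smooth_on I \<gamma>" and "\<gamma> ` I \<subseteq> U"
  shows "kummer_principal_line \<Omega> x \<Delta> I \<gamma> \<longleftrightarrow> line_of_curvature \<Omega> \<xi> \<Lambda> I \<gamma>"
proof -
  have sx: "smooth_on U x" using assms(2) unfolding proper_frontal_def frontal_def by blast
  have P: "\<And>t. t \<in> I \<Longrightarrow> (transpose (\<Delta> (\<gamma> t)) *v vector_derivative \<gamma> (at t) \<noteq> 0 \<longrightarrow>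
            ((\<forall>c. c \<noteq> 0 \<longrightarrow> kummer_K \<Omega> x \<Delta> (\<gamma> t) c \<le> kummer_K \<Omega> x \<Delta> (\<gamma> t) (transpose (\<Delta> (\<gamma> t)) *v vector_derivative \<gamma> (at t))) \<or>
             (\<forall>c. c \<noteq> 0 \<longrightarrow> kummer_K \<Omega> x \<Delta> (\<gamma> t) (transpose (\<Delta> (\<gamma> t)) *v vector_derivative \<gamma> (at t)) \<le> kummer_K \<Omega> x \<Delta> (\<gamma> t) c)))
     \<longleftrightarrow> det (\<Lambda> (\<gamma> t)) * (vector_derivative \<gamma> (at t) \<bullet> ((Pmat ** transpose (alpha_mat \<Omega> \<xi> \<Lambda> (\<gamma> t))) *v vector_derivative \<gamma> (at t))) = 0"
    by (rule main_pointwise[OF assms(1) _ sx assms(4) assms(5) assms(6) assms(7) assms(8)]) (use assms(13) in blast)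
  show ?thesis
    unfolding kummer_principal_line_def line_of_curvature_def Let_def
    using P by blast
qed

end
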